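(* Let $F\colon\mathbb{N}\to(0,\infty)$ satisfy $\sum_{k=1}^\infty1/F(k)<\infty$, and let $\Xi$ be the birth process with rate function $F$ and initial value $\Xi(0)\in\mathbb{N}$, with explosion time $T$. For $x\ge\Xi(0)$ let $g_x$ be the density of $T(x)=\sum_{l=\Xi(0)}^x\tau(l)$. Then there exist constants $C<\infty$ and $x_0$ such that for all $x\ge x_0$ and all $t\ge0$, $$\mathbb{P}(\Xi(t)=x)\le C\,\frac{g_x(t)}{F(x)}\qquad\text{and}\qquad \mathbb{P}(\Xi(t)>x\mid T>t)\le C\,\frac{g_x(t)}{\mathbb{P}(T>t)}\sum_{k=x+1}^\infty\frac{1}{F(k)}.$$ (That is, $\mathbb{P}(\Xi(t)=x)\prec g_x(t)/F(x)$ and the conditional tail bound hold as $x\to\infty$, globally uniformly in $t\ge0$.)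
   Context: $\mathbb{N}=\{1,2,\dots\}$. The $\tau(k)$, $k\ge\Xi(0)$, are independent, $\tau(k)$ exponential with rate $F(k)$; $\Xi(t)=\min\{k:\sum_{l=\Xi(0)}^k\tau(l)>t\}$ (min of empty set $=\infty$) and $T=\sum_{k\ge\Xi(0)}\tau(k)$. For sequences, $x_k\prec y_k$ means $\limsup x_k/y_k<\infty$. *)

theory Defs
  imports "HOL-Probability.Probability"
begin

definition birth_state :: "nat \<Rightarrow> (nat \<Rightarrow> 'a \<Rightarrow> real) \<Rightarrow> real \<Rightarrow> 'a \<Rightarrow> enat" where
  "birth_state n0 \<tau> t \<omega> =
     (if \<exists>k\<ge>n0. (\<Sum>l=n0..k. \<tau> l \<omega>) > t
      then enat (LEAST k. k \<ge> n0 \<and> (\<Sum>l=n0..k. \<tau> l \<omega>) > t)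
      else \<infinity>)"

definition explosion_time :: "nat \<Rightarrow> (nat \<Rightarrow> 'a \<Rightarrow> real) \<Rightarrow> 'a \<Rightarrow> real" where
  "explosion_time n0 \<tau> \<omega> = (\<Sum>k. \<tau> (n0 + k) \<omega>)"

end

theory Submission
  imports Defs
begin


context prob_space begin

lemma indep_pair_emeasure:
  assumes ind: "indep_var borel A borel B" and S: "S \<in> sets (borel \<Otimes>\<^sub>M borel)"
  shows "emeasure M {\<omega>\<in>space M. (A \<omega>, B \<omega>) \<in> S} =
    (\<integral>\<^sup>+r. emeasure M {\<omega>\<in>space M. (r, B \<omega>) \<in> S} \<partial>distr M borel A)"
proof -
  have rA: "A \<in> borel_measurable M" and rB: "B \<in> borel_measurable M"
    using ind by (auto dest: indep_var_rv1 indep_var_rv2)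
  have j: "distr M borel A \<Otimes>\<^sub>M distr M borel B = distr M (borel \<Otimes>\<^sub>M borel) (\<lambda>x. (A x, B x))"
    using ind indep_var_distribution_eq by blast
  interpret pB: prob_space "distr M borel B" using rB by (rule prob_space_distr)
  have S': "S \<in> sets (distr M borel A \<Otimes>\<^sub>M distr M borel B)"
    using S by simp
  have "emeasure M {\<omega>\<in>space M. (A \<omega>, B \<omega>) \<in> S} = emeasure (distr M (borel \<Otimes>\<^sub>M borel) (\<lambda>x. (A x, B x))) S"
    using rA rB S by (subst emeasure_distr) (auto intro: measurable_Pair simp: vimage_def Int_def conj_commute)
  also have "\<dots> = emeasure (distr M borel A \<Otimes>\<^sub>M distr M borel B) S" by (simp add: j)
  also have "\<dots> = (\<integral>\<^sup>+r. emeasure (distr M borel B) (Pair r -` S) \<partial>distr M borel A)"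
    by (rule pB.emeasure_pair_measure_alt[OF S'])
  also have "\<dots> = (\<integral>\<^sup>+r. emeasure M {\<omega>\<in>space M. (r, B \<omega>) \<in> S} \<partial>distr M borel A)"
  proof (rule nn_integral_cong)
    fix r
    have "Pair r -` S \<in> sets borel" using S by (rule sets_Pair1)
    then show "emeasure (distr M borel B) (Pair r -` S) = emeasure M {\<omega>\<in>space M. (r, B \<omega>) \<in> S}"
      using rB by (subst emeasure_distr) (auto intro!: arg_cong[where f="emeasure M"])
  qed
  finally show ?thesis .
qed

lemma indep_pair_emeasure_meas:
  assumes rB: "B \<in> borel_measurable M" and S: "S \<in> sets (borel \<Otimes>\<^sub>M borel)"
  shows "(\<lambda>r. emeasure M {\<omega>\<in>space M. (r, B \<omega>) \<in> S}) \<in> borel_measurable borel"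
proof -
  interpret pB: prob_space "distr M borel B" using rB by (rule prob_space_distr)
  have S': "S \<in> sets (borel \<Otimes>\<^sub>M distr M borel B)" using S by simp
  have "(\<lambda>r. emeasure (distr M borel B) (Pair r -` S)) \<in> borel_measurable borel"
    by (rule pB.measurable_emeasure_Pair[OF S'])
  moreover have "emeasure (distr M borel B) (Pair r -` S) = emeasure M {\<omega>\<in>space M. (r, B \<omega>) \<in> S}" for r
  proof -
    have "Pair r -` S \<in> sets borel" using S by (rule sets_Pair1)
    then show ?thesis
      using rB by (subst emeasure_distr) (auto intro!: arg_cong[where f="emeasure M"])
  qed
  ultimately show ?thesis by simp
qed

end

lemma test_set_aux: "{p \<in> space (borel \<Otimes>\<^sub>M borel). (a::real) < fst p + snd p \<and> fst p + snd p \<le> a + h} \<in> sets (borel \<Otimes>\<^sub>M borel)"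
  by measurable



context prob_space begin

lemma expo_cdf:
  assumes D: "distributed M lborel X (\<lambda>s. ennreal (exponential_density l s))" and l: "0 < l"
  shows "measure M {\<omega>\<in>space M. X \<omega> \<le> a} = 1 - exp (- l * max a 0)"
proof (cases "0 \<le> a")
  case True
  then show ?thesis using exponential_distributedD_le[OF D True l] by (simp add: mult.commute)
next
  case False
  have X: "X \<in> borel_measurable M" using distributed_measurable[OF D] by simp
  have "measure M {\<omega>\<in>space M. X \<omega> \<le> a} \<le> measure M {\<omega>\<in>space M. X \<omega> \<le> 0}"
    using False X by (intro finite_measure_mono) auto
  also have "\<dots> = 0" using exponential_distributedD_le[OF D _ l, of 0] by simp
  finally show ?thesis using False by (simp add: measure_nonneg antisym)
qed

lemma expo_interval:
  assumes D: "distributed M lborel X (\<lambda>s. ennreal (exponential_density l s))" and l: "0 < l"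
    and h: "0 \<le> h"
  shows "measure M {\<omega>\<in>space M. c < X \<omega> \<and> X \<omega> \<le> c + h} = exp (- l * max c 0) - exp (- l * max (c + h) 0)"
proof -
  have X: "X \<in> borel_measurable M" using distributed_measurable[OF D] by simp
  have "{\<omega>\<in>space M. c < X \<omega> \<and> X \<omega> \<le> c + h} = {\<omega>\<in>space M. X \<omega> \<le> c + h} - {\<omega>\<in>space M. X \<omega> \<le> c}"
    by auto
  moreover have "measure M ({\<omega>\<in>space M. X \<omega> \<le> c + h} - {\<omega>\<in>space M. X \<omega> \<le> c}) =
     measure M {\<omega>\<in>space M. X \<omega> \<le> c + h} - measure M {\<omega>\<in>space M. X \<omega> \<le> c}"
    using X h by (intro finite_measure_Diff) auto
  ultimately show ?thesis using expo_cdf[OF D l] by simp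
qed

lemma expo_gt:
  assumes D: "distributed M lborel X (\<lambda>s. ennreal (exponential_density l s))" and l: "0 < l"
  shows "measure M {\<omega>\<in>space M. c < X \<omega>} = exp (- l * max c 0)"
proof -
  have X: "X \<in> borel_measurable M" using distributed_measurable[OF D] by simp
  have "{\<omega>\<in>space M. c < X \<omega>} = space M - {\<omega>\<in>space M. X \<omega> \<le> c}"
    by auto
  moreover have "measure M (space M - {\<omega>\<in>space M. X \<omega> \<le> c}) = 1 - measure M {\<omega>\<in>space M. X \<omega> \<le> c}"
    using X by (subst finite_measure_Diff) (auto simp: prob_space)
  ultimately show ?thesis using expo_cdf[OF D l] by simp
qed

end

lemma psi_mono:
  fixes \<mu> h a b :: real
  assumes "0 \<le> \<mu>" "0 \<le> h" "a \<le> b"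
  shows "exp (\<mu> * a) * (exp (- \<mu> * max a 0) - exp (- \<mu> * max (a + h) 0))
      \<le> exp (\<mu> * b) * (exp (- \<mu> * max b 0) - exp (- \<mu> * max (b + h) 0))"
proof -
  have e: "exp (\<mu> * x) * (exp (- \<mu> * max x 0) - exp (- \<mu> * max (x + h) 0)) =
     (if x + h \<le> 0 then 0 else exp (\<mu> * min x 0) - exp (- \<mu> * h))" for x
  proof -
    have "exp (\<mu> * x) * (exp (- \<mu> * max x 0) - exp (- \<mu> * max (x + h) 0)) =
      exp (\<mu> * x - \<mu> * max x 0) - exp (\<mu> * x - \<mu> * max (x + h) 0)"
      by (simp add: right_diff_distrib exp_add[symmetric])
    also have "\<dots> = (if x + h \<le> 0 then 0 else exp (\<mu> * min x 0) - exp (- \<mu> * h))"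
      using assms(2) by (cases "x + h \<le> 0"; cases "x \<le> 0") (auto simp: max_def min_def algebra_simps)
    finally show ?thesis .
  qed
  have m: "exp (\<mu> * min a 0) \<le> exp (\<mu> * min b 0)"
    using assms by (auto intro: mult_left_mono mult_nonneg_nonpos simp: min_def)
  have p: "x + h > 0 \<Longrightarrow> exp (- \<mu> * h) \<le> exp (\<mu> * min x 0)" for x
  proof -
    assume "x + h > 0"
    then have "\<mu> * (- h) \<le> \<mu> * min x 0" using assms by (intro mult_left_mono) auto
    then show ?thesis by simp
  qed
  show ?thesis unfolding e using m p[of b] assms by auto
qed



context prob_space begin

lemma mono_base:
  assumes D: "distributed M lborel X (\<lambda>s. ennreal (exponential_density \<mu> s))" and l: "0 < \<mu>"
    and h: "0 \<le> h" and ab: "a \<le> b"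
  shows "exp (\<mu> * a) * measure M {\<omega>\<in>space M. a < X \<omega> \<and> X \<omega> \<le> a + h}
       \<le> exp (\<mu> * b) * measure M {\<omega>\<in>space M. b < X \<omega> \<and> X \<omega> \<le> b + h}"
  unfolding expo_interval[OF D l h] using psi_mono[of \<mu> h a b] l h ab by simp

lemma sum_set_eq:
  fixes A :: "'a \<Rightarrow> real"
  shows "{\<omega>\<in>space M. (u, A \<omega>) \<in> {p \<in> space (borel \<Otimes>\<^sub>M borel). a < fst p + snd p \<and> fst p + snd p \<le> a + h}}
   = {\<omega>\<in>space M. a - u < A \<omega> \<and> A \<omega> \<le> a - u + h}"
  by (auto simp: space_pair_measure)

lemma conv_emeasure:
  fixes A B :: "'a \<Rightarrow> real"
  assumes ind: "indep_var borel B borel A"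
  shows "emeasure M {\<omega>\<in>space M. a < B \<omega> + A \<omega> \<and> B \<omega> + A \<omega> \<le> a + h} =
    (\<integral>\<^sup>+u. ennreal (measure M {\<omega>\<in>space M. a - u < A \<omega> \<and> A \<omega> \<le> a - u + h}) \<partial>distr M borel B)"
    and "(\<lambda>u. ennreal (measure M {\<omega>\<in>space M. a - u < A \<omega> \<and> A \<omega> \<le> a - u + h})) \<in> borel_measurable borel"
proof -
  let ?S = "{p \<in> space (borel \<Otimes>\<^sub>M borel). a < fst p + snd p \<and> fst p + snd p \<le> a + h}"
  have S: "?S \<in> sets (borel \<Otimes>\<^sub>M borel)" by measurable
  have rA: "A \<in> borel_measurable M" using ind by (auto dest: indep_var_rv2)
  have e: "emeasure M {\<omega>\<in>space M. (u, A \<omega>) \<in> ?S} = ennreal (measure M {\<omega>\<in>space M. a - u < A \<omega> \<and> A \<omega> \<le> a - u + h})" for u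
    unfolding sum_set_eq by (simp add: emeasure_eq_measure)
  have "emeasure M {\<omega>\<in>space M. a < B \<omega> + A \<omega> \<and> B \<omega> + A \<omega> \<le> a + h} = emeasure M {\<omega>\<in>space M. (B \<omega>, A \<omega>) \<in> ?S}"
    by (auto simp: space_pair_measure intro!: arg_cong[where f="emeasure M"])
  also have "\<dots> = (\<integral>\<^sup>+u. emeasure M {\<omega>\<in>space M. (u, A \<omega>) \<in> ?S} \<partial>distr M borel B)"
    by (rule indep_pair_emeasure[OF ind S])
  finally show "emeasure M {\<omega>\<in>space M. a < B \<omega> + A \<omega> \<and> B \<omega> + A \<omega> \<le> a + h} =
    (\<integral>\<^sup>+u. ennreal (measure M {\<omega>\<in>space M. a - u < A \<omega> \<and> A \<omega> \<le> a - u + h}) \<partial>distr M borel B)"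
    unfolding e .
  show "(\<lambda>u. ennreal (measure M {\<omega>\<in>space M. a - u < A \<omega> \<and> A \<omega> \<le> a - u + h})) \<in> borel_measurable borel"
    using indep_pair_emeasure_meas[OF rA S] unfolding e .
qed

lemma mono_preserve:
  fixes A B :: "'a \<Rightarrow> real"
  assumes ind: "indep_var borel B borel A" and mu: "0 \<le> \<mu>"
    and mono: "\<And>a b. a \<le> b \<Longrightarrow> exp (\<mu> * a) * measure M {\<omega>\<in>space M. a < A \<omega> \<and> A \<omega> \<le> a + h}
       \<le> exp (\<mu> * b) * measure M {\<omega>\<in>space M. b < A \<omega> \<and> A \<omega> \<le> b + h}"
    and ab: "a \<le> b"
  shows "exp (\<mu> * a) * measure M {\<omega>\<in>space M. a < B \<omega> + A \<omega> \<and> B \<omega> + A \<omega> \<le> a + h}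
       \<le> exp (\<mu> * b) * measure M {\<omega>\<in>space M. b < B \<omega> + A \<omega> \<and> B \<omega> + A \<omega> \<le> b + h}"
proof -
  define DA where "DA c = measure M {\<omega>\<in>space M. c < A \<omega> \<and> A \<omega> \<le> c + h}" for c
  have E: "emeasure M {\<omega>\<in>space M. c < B \<omega> + A \<omega> \<and> B \<omega> + A \<omega> \<le> c + h} =
    (\<integral>\<^sup>+u. ennreal (DA (c - u)) \<partial>distr M borel B)" for c
    unfolding DA_def by (rule conv_emeasure(1)[OF ind])
  have Em: "(\<lambda>u. ennreal (DA (c - u))) \<in> borel_measurable (distr M borel B)" for c
    unfolding DA_def using conv_emeasure(2)[OF ind, of c h] by simp
  have key: "ennreal (exp (\<mu> * c)) * emeasure M {\<omega>\<in>space M. c < B \<omega> + A \<omega> \<and> B \<omega> + A \<omega> \<le> c + h} =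
     (\<integral>\<^sup>+u. ennreal (exp (\<mu> * c) * DA (c - u)) \<partial>distr M borel B)" for c
    unfolding E using Em[of c]
    by (subst nn_integral_cmult[symmetric]) (auto simp: ennreal_mult DA_def)
  have "(\<integral>\<^sup>+u. ennreal (exp (\<mu> * a) * DA (a - u)) \<partial>distr M borel B) \<le>
        (\<integral>\<^sup>+u. ennreal (exp (\<mu> * b) * DA (b - u)) \<partial>distr M borel B)"
  proof (rule nn_integral_mono)
    fix u
    have "exp (\<mu> * a) * DA (a - u) = exp (\<mu> * u) * (exp (\<mu> * (a - u)) * DA (a - u))"
      by (simp add: exp_add[symmetric] algebra_simps)
    also have "\<dots> \<le> exp (\<mu> * u) * (exp (\<mu> * (b - u)) * DA (b - u))"
      using mono[of "a - u" "b - u"] ab unfolding DA_def by (intro mult_left_mono) auto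
    also have "\<dots> = exp (\<mu> * b) * DA (b - u)"
      by (simp add: exp_add[symmetric] algebra_simps)
    finally show "ennreal (exp (\<mu> * a) * DA (a - u)) \<le> ennreal (exp (\<mu> * b) * DA (b - u))"
      by (rule ennreal_leI)
  qed
  then have "ennreal (exp (\<mu> * a)) * emeasure M {\<omega>\<in>space M. a < B \<omega> + A \<omega> \<and> B \<omega> + A \<omega> \<le> a + h} \<le>
     ennreal (exp (\<mu> * b)) * emeasure M {\<omega>\<in>space M. b < B \<omega> + A \<omega> \<and> B \<omega> + A \<omega> \<le> b + h}"
    unfolding key .
  then show ?thesis
    by (simp add: emeasure_eq_measure ennreal_mult[symmetric] ennreal_le_iff)
qed

end


lemma nn_integral_expdens: "0 < l \<Longrightarrow> (\<integral>\<^sup>+u. ennreal (exponential_density l u) \<partial>lborel) = 1"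
proof -
  assume l: "0 < l"
  interpret p: prob_space "density lborel (\<lambda>u. ennreal (exponential_density l u))"
    using prob_space_exponential_density[OF l] .
  have "emeasure (density lborel (\<lambda>u. ennreal (exponential_density l u))) UNIV = 1"
    using p.emeasure_space_1 by simp
  then show ?thesis by (subst (asm) emeasure_density) auto
qed

context prob_space begin

lemma distr_expo:
  assumes D: "distributed M lborel X f"
  shows "distr M borel X = density lborel f"
proof -
  have "distr M borel X = distr M lborel X" by (rule distr_cong) auto
  then show ?thesis using distributed_distr_eq_density[OF D] by simp
qed

lemma ratio_step:
  fixes A X :: "'a \<Rightarrow> real"
  assumes ind: "indep_var borel X borel A"
    and D: "distributed M lborel X (\<lambda>s. ennreal (exponential_density l s))"
    and mu: "0 \<le> \<mu>" "\<mu> < l"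
    and mono: "\<And>a b. a \<le> b \<Longrightarrow> exp (\<mu> * a) * measure M {\<omega>\<in>space M. a < A \<omega> \<and> A \<omega> \<le> a + h}
       \<le> exp (\<mu> * b) * measure M {\<omega>\<in>space M. b < A \<omega> \<and> A \<omega> \<le> b + h}"
  shows "measure M {\<omega>\<in>space M. t < X \<omega> + A \<omega> \<and> X \<omega> + A \<omega> \<le> t + h}
     \<le> l / (l - \<mu>) * measure M {\<omega>\<in>space M. t < A \<omega> \<and> A \<omega> \<le> t + h}"
proof -
  define DA where "DA c = measure M {\<omega>\<in>space M. c < A \<omega> \<and> A \<omega> \<le> c + h}" for c
  have l: "0 < l" using mu by simp
  have E: "emeasure M {\<omega>\<in>space M. t < X \<omega> + A \<omega> \<and> X \<omega> + A \<omega> \<le> t + h} =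
    (\<integral>\<^sup>+u. ennreal (DA (t - u)) \<partial>distr M borel X)"
    unfolding DA_def by (rule conv_emeasure(1)[OF ind])
  have Em: "(\<lambda>u. ennreal (DA (t - u))) \<in> borel_measurable borel"
    unfolding DA_def using conv_emeasure(2)[OF ind, of t h] by simp
  have fm: "(\<lambda>s. ennreal (exponential_density l s)) \<in> borel_measurable borel"
    using distributed_borel_measurable[OF D] by simp
  have "(\<integral>\<^sup>+u. ennreal (DA (t - u)) \<partial>distr M borel X) =
     (\<integral>\<^sup>+u. ennreal (exponential_density l u) * ennreal (DA (t - u)) \<partial>lborel)"
    unfolding distr_expo[OF D] using Em fm by (subst nn_integral_density) auto
  also have "\<dots> \<le> (\<integral>\<^sup>+u. ennreal (l / (l - \<mu>) * DA t) * ennreal (exponential_density (l - \<mu>) u) \<partial>lborel)"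
  proof (rule nn_integral_mono)
    fix u
    show "ennreal (exponential_density l u) * ennreal (DA (t - u)) \<le>
      ennreal (l / (l - \<mu>) * DA t) * ennreal (exponential_density (l - \<mu>) u)"
    proof (cases "u < 0")
      case True then show ?thesis by (simp add: exponential_density_def)
    next
      case False
      have "exp (\<mu> * (t - u)) * DA (t - u) \<le> exp (\<mu> * t) * DA t"
        using mono[of "t - u" t] False unfolding DA_def by simp
      then have "exp (- (\<mu> * (t - u))) * (exp (\<mu> * (t - u)) * DA (t - u)) \<le> exp (- (\<mu> * (t - u))) * (exp (\<mu> * t) * DA t)"
        by (intro mult_left_mono) auto
      moreover have "exp (- (\<mu> * (t - u))) * (exp (\<mu> * (t - u)) * DA (t - u)) = DA (t - u)"
        by (simp add: mult.assoc[symmetric] exp_add[symmetric])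
      moreover have "exp (- (\<mu> * (t - u))) * (exp (\<mu> * t) * DA t) = exp (\<mu> * u) * DA t"
        by (simp add: mult.assoc[symmetric] exp_add[symmetric] right_diff_distrib)
      ultimately have d: "DA (t - u) \<le> exp (\<mu> * u) * DA t" by simp
      have "l * exp (- u * l) * DA (t - u) \<le> l * exp (- u * l) * (exp (\<mu> * u) * DA t)"
        using d l by (intro mult_left_mono) auto
      also have "\<dots> = l / (l - \<mu>) * DA t * ((l - \<mu>) * exp (- u * (l - \<mu>)))"
        using mu by (simp add: exp_add[symmetric] field_simps)
      finally show ?thesis using False l mu
        by (simp add: exponential_density_def ennreal_mult[symmetric] DA_def measure_nonneg)
    qed
  qed
  also have "\<dots> = ennreal (l / (l - \<mu>) * DA t)"
    using mu by (subst nn_integral_cmult) (auto simp: nn_integral_expdens)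
  finally have "emeasure M {\<omega>\<in>space M. t < X \<omega> + A \<omega> \<and> X \<omega> + A \<omega> \<le> t + h} \<le> ennreal (l / (l - \<mu>) * DA t)"
    using E by simp
  then show ?thesis using mu unfolding DA_def
    by (simp add: emeasure_eq_measure ennreal_le_iff measure_nonneg)
qed

end


context prob_space begin

lemma xi_step:
  fixes A X :: "'a \<Rightarrow> real"
  assumes ind: "indep_var borel A borel X"
    and D: "distributed M lborel X (\<lambda>s. ennreal (exponential_density l s))" and l: "0 < l"
    and h: "0 \<le> h"
  shows "measure M {\<omega>\<in>space M. A \<omega> \<le> t \<and> t < A \<omega> + X \<omega> \<and> A \<omega> + X \<omega> \<le> t + h}
     = (1 - exp (- l * h)) * measure M {\<omega>\<in>space M. A \<omega> \<le> t \<and> t < A \<omega> + X \<omega>}"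
proof -
  let ?S1 = "{p \<in> space (borel \<Otimes>\<^sub>M borel). fst p \<le> t \<and> t < fst p + snd p \<and> fst p + snd p \<le> t + h}"
  let ?S2 = "{p \<in> space (borel \<Otimes>\<^sub>M borel). fst p \<le> t \<and> t < fst p + snd p}"
  have S1: "?S1 \<in> sets (borel \<Otimes>\<^sub>M borel)" by measurable
  have S2: "?S2 \<in> sets (borel \<Otimes>\<^sub>M borel)" by measurable
  have rX: "X \<in> borel_measurable M" using ind by (auto dest: indep_var_rv2)
  have c0: "0 \<le> 1 - exp (- l * h)" using l h by simp
  have pt: "emeasure M {\<omega>\<in>space M. (r, X \<omega>) \<in> ?S1} = ennreal (1 - exp (- l * h)) * emeasure M {\<omega>\<in>space M. (r, X \<omega>) \<in> ?S2}" for r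
  proof (cases "r \<le> t")
    case True
    have "{\<omega>\<in>space M. (r, X \<omega>) \<in> ?S1} = {\<omega>\<in>space M. t - r < X \<omega> \<and> X \<omega> \<le> t - r + h}"
      using True by (auto simp: space_pair_measure)
    moreover have "{\<omega>\<in>space M. (r, X \<omega>) \<in> ?S2} = {\<omega>\<in>space M. t - r < X \<omega>}"
      using True by (auto simp: space_pair_measure)
    moreover have "exp (- l * max (t - r) 0) - exp (- l * max (t - r + h) 0) = (1 - exp (- l * h)) * exp (- l * max (t - r) 0)"
      using True h by (simp add: max_def algebra_simps exp_add[symmetric])
    ultimately show ?thesis using c0
      by (simp add: emeasure_eq_measure expo_interval[OF D l h] expo_gt[OF D l] ennreal_mult[symmetric])
  next
    case False
    then have e1: "{\<omega>\<in>space M. (r, X \<omega>) \<in> ?S1} = {}" and e2: "{\<omega>\<in>space M. (r, X \<omega>) \<in> ?S2} = {}"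
      by auto
    show ?thesis unfolding e1 e2 by simp
  qed
  have "emeasure M {\<omega>\<in>space M. A \<omega> \<le> t \<and> t < A \<omega> + X \<omega> \<and> A \<omega> + X \<omega> \<le> t + h}
      = emeasure M {\<omega>\<in>space M. (A \<omega>, X \<omega>) \<in> ?S1}"
    by (auto simp: space_pair_measure intro!: arg_cong[where f="emeasure M"])
  also have "\<dots> = (\<integral>\<^sup>+r. emeasure M {\<omega>\<in>space M. (r, X \<omega>) \<in> ?S1} \<partial>distr M borel A)"
    by (rule indep_pair_emeasure[OF ind S1])
  also have "\<dots> = (\<integral>\<^sup>+r. ennreal (1 - exp (- l * h)) * emeasure M {\<omega>\<in>space M. (r, X \<omega>) \<in> ?S2} \<partial>distr M borel A)"
    unfolding pt ..
  also have "\<dots> = ennreal (1 - exp (- l * h)) * (\<integral>\<^sup>+r. emeasure M {\<omega>\<in>space M. (r, X \<omega>) \<in> ?S2} \<partial>distr M borel A)"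
    using indep_pair_emeasure_meas[OF rX S2] by (subst nn_integral_cmult) auto
  also have "(\<integral>\<^sup>+r. emeasure M {\<omega>\<in>space M. (r, X \<omega>) \<in> ?S2} \<partial>distr M borel A) = emeasure M {\<omega>\<in>space M. (A \<omega>, X \<omega>) \<in> ?S2}"
    by (rule indep_pair_emeasure[OF ind S2, symmetric])
  also have "\<dots> = emeasure M {\<omega>\<in>space M. A \<omega> \<le> t \<and> t < A \<omega> + X \<omega>}"
    by (auto simp: space_pair_measure intro!: arg_cong[where f="emeasure M"])
  finally show ?thesis using c0
    by (simp add: emeasure_eq_measure ennreal_mult[symmetric] measure_nonneg)
qed

lemma pos_step:
  fixes A X :: "'a \<Rightarrow> real"
  assumes ind: "indep_var borel A borel X"
  shows "measure M {\<omega>\<in>space M. 0 < A \<omega> \<and> A \<omega> \<le> s1} * measure M {\<omega>\<in>space M. c < X \<omega> \<and> X \<omega> \<le> c + s2}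
     \<le> measure M {\<omega>\<in>space M. c < A \<omega> + X \<omega> \<and> A \<omega> + X \<omega> \<le> c + s1 + s2}"
proof -
  have rA: "A \<in> borel_measurable M" and rX: "X \<in> borel_measurable M"
    using ind by (auto dest: indep_var_rv1 indep_var_rv2)
  have "measure M {\<omega>\<in>space M. 0 < A \<omega> \<and> A \<omega> \<le> s1} * measure M {\<omega>\<in>space M. c < X \<omega> \<and> X \<omega> \<le> c + s2}
     = prob ((\<lambda>x. (A x, X x)) -` ({0<..s1} \<times> {c<..c+s2}) \<inter> space M)"
    by (subst indep_varD[OF ind]) (auto intro!: arg_cong2[where f="(*)"] arg_cong[where f="measure M"])
  also have "\<dots> \<le> measure M {\<omega>\<in>space M. c < A \<omega> + X \<omega> \<and> A \<omega> + X \<omega> \<le> c + s1 + s2}"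
    using rA rX by (intro finite_measure_mono) auto
  finally show ?thesis .
qed

lemma indep_sums:
  fixes \<tau> :: "nat \<Rightarrow> 'a \<Rightarrow> real"
  assumes ind: "indep_vars (\<lambda>_. borel) \<tau> N" and IJ: "I \<inter> J = {}" "I \<subseteq> N" "J \<subseteq> N"
  shows "indep_var borel (\<lambda>\<omega>. \<Sum>i\<in>I. \<tau> i \<omega>) borel (\<lambda>\<omega>. \<Sum>j\<in>J. \<tau> j \<omega>)"
proof -
  have r: "indep_var (PiM I (\<lambda>_. borel)) (\<lambda>\<omega>. restrict (\<lambda>i. \<tau> i \<omega>) I) (PiM J (\<lambda>_. borel)) (\<lambda>\<omega>. restrict (\<lambda>i. \<tau> i \<omega>) J)"
    by (rule indep_var_restrict[OF ind IJ])
  have m: "(\<lambda>f. \<Sum>i\<in>K. f i) \<in> borel_measurable (PiM K (\<lambda>_. borel :: real measure))" for K :: "nat set"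
    by (intro borel_measurable_sum measurable_component_singleton) auto
  have "indep_var borel ((\<lambda>f. \<Sum>i\<in>I. f i) \<circ> (\<lambda>\<omega>. restrict (\<lambda>i. \<tau> i \<omega>) I)) borel ((\<lambda>f. \<Sum>i\<in>J. f i) \<circ> (\<lambda>\<omega>. restrict (\<lambda>i. \<tau> i \<omega>) J))"
    by (rule indep_var_compose[OF r m m])
  moreover have "((\<lambda>f. \<Sum>i\<in>K. f i) \<circ> (\<lambda>\<omega>. restrict (\<lambda>i. \<tau> i \<omega>) K)) = (\<lambda>\<omega>. \<Sum>i\<in>K. \<tau> i \<omega>)" for K
    by (auto simp: fun_eq_iff intro!: sum.cong)
  ultimately show ?thesis by simp
qed

end

lemma birth_state_enat:
  "birth_state n0 \<tau> t \<omega> = enat k \<longleftrightarrow>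
    n0 \<le> k \<and> t < (\<Sum>l=n0..k. \<tau> l \<omega>) \<and> (\<forall>j\<in>{n0..<k}. (\<Sum>l=n0..j. \<tau> l \<omega>) \<le> t)"
proof
  let ?P = "\<lambda>k. k \<ge> n0 \<and> (\<Sum>l=n0..k. \<tau> l \<omega>) > t"
  assume a: "birth_state n0 \<tau> t \<omega> = enat k"
  then have ex: "\<exists>k. ?P k"
    unfolding birth_state_def by (metis infinity_ne_i0 enat.distinct(2))
  with a have k: "k = (LEAST k. ?P k)"
    unfolding birth_state_def by (metis enat.inject)
  from ex have "?P k" unfolding k by (rule LeastI_ex)
  moreover have "(\<Sum>l=n0..j. \<tau> l \<omega>) \<le> t" if j: "j \<in> {n0..<k}" for j
  proof -
    have "\<not> ?P j" using not_less_Least[of j ?P] j unfolding k by simp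
    then show ?thesis using j by simp
  qed
  ultimately show "n0 \<le> k \<and> t < (\<Sum>l=n0..k. \<tau> l \<omega>) \<and> (\<forall>j\<in>{n0..<k}. (\<Sum>l=n0..j. \<tau> l \<omega>) \<le> t)" by blast
next
  let ?P = "\<lambda>k. k \<ge> n0 \<and> (\<Sum>l=n0..k. \<tau> l \<omega>) > t"
  assume a: "n0 \<le> k \<and> t < (\<Sum>l=n0..k. \<tau> l \<omega>) \<and> (\<forall>j\<in>{n0..<k}. (\<Sum>l=n0..j. \<tau> l \<omega>) \<le> t)"
  have "(LEAST k. ?P k) = k"
  proof (rule Least_equality)
    show "?P k" using a by blast
    fix y assume y: "?P y"
    show "k \<le> y"
    proof (rule ccontr)
      assume "\<not> k \<le> y"
      then have "y \<in> {n0..<k}" using y by simp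
      then show False using a y by fastforce
    qed
  qed
  moreover have "\<exists>k. ?P k" using a by blast
  ultimately show "birth_state n0 \<tau> t \<omega> = enat k" unfolding birth_state_def by simp
qed



lemma le_of_small:
  fixes a b c \<delta> :: real
  assumes "0 < \<delta>" "0 \<le> c" "\<And>h. 0 < h \<Longrightarrow> h \<le> \<delta> \<Longrightarrow> a \<le> b + c * h"
  shows "a \<le> b"
proof (rule field_le_epsilon)
  fix e :: real assume e: "0 < e"
  define h where "h = min \<delta> (e / (c + 1))"
  have h: "0 < h" "h \<le> \<delta>" using assms e by (auto simp: h_def)
  have "c * h \<le> c * (e / (c + 1))" using assms by (intro mult_left_mono) (auto simp: h_def)
  also have "\<dots> \<le> e" using assms e by (simp add: field_simps)
  finally show "a \<le> b + e" using assms(3)[OF h] by simp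
qed

lemma one_minus_exp_ge: "0 \<le> (y::real) \<Longrightarrow> y / (1 + y) \<le> 1 - exp (- y)"
proof -
  assume y: "0 \<le> y"
  have "1 + y \<le> exp y" by (rule exp_ge_add_one_self)
  then have "exp (- y) * (1 + y) \<le> exp (- y) * exp y" by (intro mult_left_mono) auto
  then have "exp (- y) * (1 + y) \<le> 1" by (simp add: exp_add[symmetric])
  then have "exp (- y) \<le> 1 / (1 + y)" using y by (simp add: field_simps)
  moreover have "1 / (1 + y) = 1 - y / (1 + y)" using y by (simp add: field_simps)
  ultimately show ?thesis by simp
qed

lemma ratio_exp_bound:
  fixes F \<mu> :: real
  assumes "0 < \<mu>" "2 * \<mu> < F"
  shows "F / (F - \<mu>) \<le> exp (2 * \<mu> / F)"
proof -
  have "F / (F - \<mu>) = 1 + \<mu> / (F - \<mu>)" using assms by (simp add: field_simps)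
  also have "\<mu> / (F - \<mu>) \<le> 2 * \<mu> / F" using assms by (simp add: field_simps)
  then have "1 + \<mu> / (F - \<mu>) \<le> 1 + 2 * \<mu> / F" by simp
  also have "\<dots> \<le> exp (2 * \<mu> / F)" by (rule exp_ge_add_one_self)
  finally show ?thesis by simp
qed

lemma partial_shift:
  fixes n n0 :: nat
  shows "(\<Sum>i\<le>n. f (n0 + i)) = (\<Sum>l=n0..n0+n. (f l :: real))"
  by (induction n) (auto simp: add.commute)



theorem corollary1:
  fixes M :: "'a measure" and F :: "nat \<Rightarrow> real" and n0 :: nat
    and \<tau> :: "nat \<Rightarrow> 'a \<Rightarrow> real" and g :: "nat \<Rightarrow> real \<Rightarrow> real"
  assumes P: "prob_space M"
    and Fpos: "\<forall>k\<ge>1. F k > 0"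
    and Fsum: "summable (\<lambda>k. 1 / F (Suc k))"
    and n0: "n0 \<ge> 1"
    and indep: "prob_space.indep_vars M (\<lambda>_. borel) \<tau> {n0..}"
    and expo: "\<forall>k\<ge>n0. distributed M lborel (\<tau> k) (\<lambda>s. ennreal (exponential_density (F k) s))"
    and dens: "\<forall>x\<ge>n0. distributed M lborel (\<lambda>\<omega>. \<Sum>l=n0..x. \<tau> l \<omega>) (\<lambda>s. ennreal (g x s))"
    and gcont: "\<forall>x\<ge>n0. continuous_on {0..} (g x)"
  shows "\<exists>(C::real) x0. x0 \<ge> n0 \<and> (\<forall>x\<ge>x0. \<forall>t\<ge>0.
           measure M {\<omega> \<in> space M. birth_state n0 \<tau> t \<omega> = enat x} \<le> C * g x t / F x
         \<and> measure M {\<omega> \<in> space M. birth_state n0 \<tau> t \<omega> > enat x \<and> explosion_time n0 \<tau> \<omega> > t}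
             / measure M {\<omega> \<in> space M. explosion_time n0 \<tau> \<omega> > t}
           \<le> C * g x t / measure M {\<omega> \<in> space M. explosion_time n0 \<tau> \<omega> > t}
               * (\<Sum>k. 1 / F (x + 1 + k)))"
proof -
  interpret prob_space M by (rule P)
  define T where "T = (\<lambda>k \<omega>. \<Sum>l=n0..k. \<tau> l \<omega>)"
  define D where "D = (\<lambda>k t h. measure M {\<omega>\<in>space M. t < T k \<omega> \<and> T k \<omega> \<le> t + h})"
  have Fs: "\<And>j. 0 < F (Suc j)" using Fpos by simp
  have Fp: "\<And>k. n0 \<le> k \<Longrightarrow> 0 < F k" using Fpos n0 by auto
  have ex: "\<And>k. n0 \<le> k \<Longrightarrow> distributed M lborel (\<tau> k) (\<lambda>s. ennreal (exponential_density (F k) s))"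
    using expo by auto
  have tm: "\<And>l. n0 \<le> l \<Longrightarrow> \<tau> l \<in> borel_measurable M"
    using distributed_measurable[OF ex] by simp
  have Tm: "\<And>k. T k \<in> borel_measurable M"
    unfolding T_def by (intro borel_measurable_sum tm) auto
  have Tsuc: "\<And>k \<omega>. n0 \<le> k \<Longrightarrow> T (Suc k) \<omega> = T k \<omega> + \<tau> (Suc k) \<omega>"
    by (simp add: T_def)
  have indI: "\<And>I J. I \<inter> J = {} \<Longrightarrow> I \<subseteq> {n0..} \<Longrightarrow> J \<subseteq> {n0..} \<Longrightarrow>
      indep_var borel (\<lambda>\<omega>. \<Sum>i\<in>I. \<tau> i \<omega>) borel (\<lambda>\<omega>. \<Sum>j\<in>J. \<tau> j \<omega>)"
    by (rule indep_sums[OF indep])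
  have ind_T_tau: "indep_var borel (T k) borel (\<tau> (Suc k))" if "n0 \<le> k" for k
    using that indI[of "{n0..k}" "{Suc k}"] unfolding T_def by auto
  have ind_tau_T: "indep_var borel (\<tau> (Suc k)) borel (T k)" if "n0 \<le> k" for k
    using that indI[of "{Suc k}" "{n0..k}"] unfolding T_def by auto

  have lim0: "(\<lambda>k. 1 / F (Suc k)) \<longlonglongrightarrow> 0" by (rule summable_LIMSEQ_zero[OF Fsum])
  have big: "\<exists>N. \<forall>k\<ge>N. c < F k" if c: "0 < c" for c
  proof -
    have "eventually (\<lambda>k. 1 / F (Suc k) < 1 / c) sequentially"
      using order_tendstoD(2)[OF lim0] c by simp
    then obtain N where N: "\<And>k. k \<ge> N \<Longrightarrow> 1 / F (Suc k) < 1 / c"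
      by (auto simp: eventually_sequentially)
    have "c < F k" if k: "k \<ge> Suc N" for k
    proof -
      obtain k' where k': "k = Suc k'" "k' \<ge> N" using k by (cases k) auto
      have "0 < F (Suc k')" using Fpos by simp
      then show ?thesis using N[OF k'(2)] c k' by (simp add: field_simps)
    qed
    then show ?thesis by blast
  qed
  obtain B where B: "\<And>k. k \<ge> B \<Longrightarrow> F n0 < F k" using big[of "F n0"] Fp[of n0] by auto
  define S where "S = {n0..max n0 B}"
  have Sfin: "finite (F ` S)" and Sne: "F ` S \<noteq> {}" by (auto simp: S_def)
  obtain m where m: "m \<in> S" "F m = Min (F ` S)" using Min_in[OF Sfin Sne] by auto
  have mmin: "F m \<le> F k" if "n0 \<le> k" for k
  proof (cases "k \<in> S")
    case True then show ?thesis using m Min_le[OF Sfin] by auto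
  next
    case False
    then have "F n0 < F k" using B that by (auto simp: S_def)
    moreover have "F m \<le> F n0" using m Min_le[OF Sfin, of "F n0"] by (auto simp: S_def)
    ultimately show ?thesis by simp
  qed
  have mn0: "n0 \<le> m" using m by (auto simp: S_def)
  define \<mu> where "\<mu> = F m"
  have mu: "0 < \<mu>" using Fp[OF mn0] by (simp add: \<mu>_def)
  obtain N where N: "\<And>k. k \<ge> N \<Longrightarrow> 2 * \<mu> < F k" using big[of "2 * \<mu>"] mu by auto
  define x0 where "x0 = Suc (max m (max n0 N))"
  define Ss where "Ss = (\<Sum>j. 1 / F (Suc j))"
  define K where "K = exp (2 * \<mu> * Ss)"
  have Ss0: "0 \<le> Ss" unfolding Ss_def using Fsum Fs by (intro suminf_nonneg) (auto intro: less_imp_le)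
  have K1: "1 \<le> K" unfolding K_def using Ss0 mu by simp

  have mono: "exp (\<mu> * a) * D k a h \<le> exp (\<mu> * b) * D k b h"
    if k: "m \<le> k" and h: "0 \<le> h" and ab: "a \<le> b" for k a b h
  proof -
    define R where "R = (\<lambda>\<omega>. \<Sum>l\<in>{n0..k}-{m}. \<tau> l \<omega>)"
    have indR: "indep_var borel R borel (\<tau> m)"
    proof -
      have "{n0..k}-{m} \<subseteq> {n0..}" "{m} \<subseteq> {n0..}" using mn0 by auto
      then show ?thesis using indI[of "{n0..k}-{m}" "{m}"] unfolding R_def by simp
    qed
    have Tk: "T k \<omega> = R \<omega> + \<tau> m \<omega>" for \<omega>
      unfolding T_def R_def using k mn0 by (subst sum.remove[of _ m]) auto
    have "exp (\<mu> * a) * measure M {\<omega>\<in>space M. a < R \<omega> + \<tau> m \<omega> \<and> R \<omega> + \<tau> m \<omega> \<le> a + h}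
       \<le> exp (\<mu> * b) * measure M {\<omega>\<in>space M. b < R \<omega> + \<tau> m \<omega> \<and> R \<omega> + \<tau> m \<omega> \<le> b + h}"
    proof (rule mono_preserve[OF indR _ _ ab])
      show "0 \<le> \<mu>" using mu by simp
      fix a b :: real assume "a \<le> b"
      then show "exp (\<mu> * a) * measure M {\<omega>\<in>space M. a < \<tau> m \<omega> \<and> \<tau> m \<omega> \<le> a + h}
         \<le> exp (\<mu> * b) * measure M {\<omega>\<in>space M. b < \<tau> m \<omega> \<and> \<tau> m \<omega> \<le> b + h}"
        using mono_base[OF ex[OF mn0], of h a b] mu h unfolding \<mu>_def by simp
    qed
    then show ?thesis unfolding D_def Tk .
  qed

  have ratio: "D (Suc k) t h \<le> F (Suc k) / (F (Suc k) - \<mu>) * D k t h"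
    if k: "m \<le> k" and h: "0 \<le> h" and F: "\<mu> < F (Suc k)" for k t h
  proof -
    have "measure M {\<omega>\<in>space M. t < \<tau> (Suc k) \<omega> + T k \<omega> \<and> \<tau> (Suc k) \<omega> + T k \<omega> \<le> t + h}
     \<le> F (Suc k) / (F (Suc k) - \<mu>) * measure M {\<omega>\<in>space M. t < T k \<omega> \<and> T k \<omega> \<le> t + h}"
    proof (rule ratio_step[OF ind_tau_T ex _ F])
      show "n0 \<le> k" "n0 \<le> Suc k" "0 \<le> \<mu>" using k mn0 mu by auto
      fix a b :: real assume "a \<le> b"
      then show "exp (\<mu> * a) * measure M {\<omega>\<in>space M. a < T k \<omega> \<and> T k \<omega> \<le> a + h}
         \<le> exp (\<mu> * b) * measure M {\<omega>\<in>space M. b < T k \<omega> \<and> T k \<omega> \<le> b + h}"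
        using mono[OF k h] unfolding D_def by simp
    qed
    moreover have "T (Suc k) \<omega> = \<tau> (Suc k) \<omega> + T k \<omega>" for \<omega>
      using Tsuc[of k \<omega>] k mn0 by simp
    ultimately show ?thesis unfolding D_def by simp
  qed

  have chain: "D (x + j) t h \<le> exp (2 * \<mu> * (\<Sum>l\<in>{x<..x+j}. 1 / F l)) * D x t h"
    if x: "x0 \<le> x" and h: "0 \<le> h" for x j t h
  proof (induction j)
    case 0 then show ?case by simp
  next
    case (Suc j)
    have F2: "2 * \<mu> < F (Suc (x + j))" using N x by (auto simp: x0_def)
    have r: "D (Suc (x + j)) t h \<le> F (Suc (x + j)) / (F (Suc (x + j)) - \<mu>) * D (x + j) t h"
    proof -
      have "m \<le> x + j" using x by (simp add: x0_def)
      moreover have "\<mu> < F (Suc (x + j))" using F2 mu by linarith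
      ultimately show ?thesis using ratio h by blast
    qed
    have r0: "0 \<le> F (Suc (x + j)) / (F (Suc (x + j)) - \<mu>)" using F2 mu by simp
    have "D (x + Suc j) t h \<le> F (Suc (x + j)) / (F (Suc (x + j)) - \<mu>) * (exp (2 * \<mu> * (\<Sum>l\<in>{x<..x+j}. 1 / F l)) * D x t h)"
      using r mult_left_mono[OF Suc r0] by simp
    also have "\<dots> \<le> exp (2 * \<mu> / F (Suc (x + j))) * (exp (2 * \<mu> * (\<Sum>l\<in>{x<..x+j}. 1 / F l)) * D x t h)"
      using ratio_exp_bound[OF mu F2] by (intro mult_right_mono) (auto simp: D_def)
    also have "\<dots> = exp (2 * \<mu> * (\<Sum>l\<in>{x<..x+Suc j}. 1 / F l)) * D x t h"
    proof -
      have "{x<..x+Suc j} = insert (Suc (x + j)) {x<..x+j}" by auto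
      then have "(\<Sum>l\<in>{x<..x+Suc j}. 1 / F l) = 1 / F (Suc (x + j)) + (\<Sum>l\<in>{x<..x+j}. 1 / F l)" by simp
      then show ?thesis by (simp add: exp_add[symmetric] algebra_simps)
    qed
    finally show ?case .
  qed
  have chainK: "D k t h \<le> K * D x t h" if x: "x0 \<le> x" "x \<le> k" and h: "0 \<le> h" for x k t h
  proof -
    obtain j where j: "k = x + j" using x by (metis le_add_diff_inverse)
    have "(\<Sum>l\<in>{x<..x+j}. 1 / F l) = (\<Sum>i\<in>{x..<x+j}. 1 / F (Suc i))"
    proof -
      have "{x<..x+j} = {Suc x..<Suc (x+j)}" by auto
      then show ?thesis by (simp only: sum.shift_bounds_Suc_ivl)
    qed
    also have "\<dots> \<le> Ss" unfolding Ss_def using Fsum Fs by (intro sum_le_suminf) (auto intro: less_imp_le)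
    finally have "exp (2 * \<mu> * (\<Sum>l\<in>{x<..x+j}. 1 / F l)) \<le> K"
      unfolding K_def using mu by simp
    then show ?thesis using chain[OF x(1) h, of j t] j
      by (smt (verit) D_def measure_nonneg mult_right_mono)
  qed
  have Tmm[measurable]: "T k \<in> borel_measurable M" for k by (rule Tm)
  have Xim: "{\<omega>\<in>space M. birth_state n0 \<tau> t \<omega> = enat k} \<in> sets M" for t k
  proof -
    have "{\<omega>\<in>space M. birth_state n0 \<tau> t \<omega> = enat k} =
       {\<omega>\<in>space M. n0 \<le> k \<and> t < T k \<omega> \<and> (\<forall>j\<in>{n0..<k}. T j \<omega> \<le> t)}"
      using birth_state_enat[of n0 \<tau> t _ k] unfolding T_def by auto
    also have "\<dots> \<in> sets M" by measurable
    finally show ?thesis .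
  qed

  have xi: "measure M {\<omega>\<in>space M. birth_state n0 \<tau> t \<omega> = enat k} * (1 - exp (- F k * h)) \<le> D k t h"
    if k: "n0 < k" and h: "0 \<le> h" for k t h
  proof -
    obtain j where j: "k = Suc j" "n0 \<le> j" using k by (cases k) auto
    have Fk: "0 < F k" using Fp k by simp
    have tkm[measurable]: "\<tau> k \<in> borel_measurable M" using tm k by simp
    have tkm'[measurable]: "\<tau> (Suc j) \<in> borel_measurable M" using tm j by simp
    have sub: "{\<omega>\<in>space M. birth_state n0 \<tau> t \<omega> = enat k} \<subseteq> {\<omega>\<in>space M. T j \<omega> \<le> t \<and> t < T j \<omega> + \<tau> k \<omega>}"
    proof safe
      fix \<omega> assume "\<omega> \<in> space M" "birth_state n0 \<tau> t \<omega> = enat k"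
      then have b: "t < T k \<omega>" "T j \<omega> \<le> t" using birth_state_enat[of n0 \<tau> t \<omega> k] j unfolding T_def by auto
      then show "T j \<omega> \<le> t" "t < T j \<omega> + \<tau> k \<omega>" using Tsuc[of j \<omega>] j by auto
    qed
    have c0: "0 \<le> 1 - exp (- F k * h)" using Fk h by simp
    have "measure M {\<omega>\<in>space M. birth_state n0 \<tau> t \<omega> = enat k} \<le> measure M {\<omega>\<in>space M. T j \<omega> \<le> t \<and> t < T j \<omega> + \<tau> k \<omega>}"
      using sub by (intro finite_measure_mono) auto
    then have "measure M {\<omega>\<in>space M. birth_state n0 \<tau> t \<omega> = enat k} * (1 - exp (- F k * h))
       \<le> (1 - exp (- F k * h)) * measure M {\<omega>\<in>space M. T j \<omega> \<le> t \<and> t < T j \<omega> + \<tau> k \<omega>}"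
      using c0 by (simp add: mult.commute mult_left_mono)
    also have "\<dots> = measure M {\<omega>\<in>space M. T j \<omega> \<le> t \<and> t < T j \<omega> + \<tau> k \<omega> \<and> T j \<omega> + \<tau> k \<omega> \<le> t + h}"
      using xi_step[OF ind_T_tau[OF j(2)] ex[of "Suc j"] _ h, of t] Fk j by simp
    also have "\<dots> \<le> D k t h"
      unfolding D_def using Tsuc[of j] j by (intro finite_measure_mono) auto
    finally show ?thesis .
  qed

  have dbound: "\<exists>\<delta>>0. \<forall>h. 0 < h \<and> h \<le> \<delta> \<longrightarrow> D x t h \<le> max 0 (g x t + \<epsilon>) * h"
    if x: "n0 \<le> x" and t: "0 \<le> t" and e: "0 < \<epsilon>" for x t \<epsilon>
  proof -
    have "\<exists>d>0. \<forall>s\<in>{0..}. dist s t < d \<longrightarrow> dist (g x s) (g x t) < \<epsilon>"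
      using gcont x t e unfolding continuous_on_iff by auto
    then obtain d where d: "d > 0" "\<And>s. s \<in> {0..} \<Longrightarrow> dist s t < d \<Longrightarrow> dist (g x s) (g x t) < \<epsilon>"
      by blast
    have dx: "distributed M lborel (T x) (\<lambda>s. ennreal (g x s))" using dens x unfolding T_def by auto
    have "D x t h \<le> max 0 (g x t + \<epsilon>) * h" if h: "0 < h" "h \<le> d/2" for h
    proof -
      have "emeasure M {\<omega>\<in>space M. t < T x \<omega> \<and> T x \<omega> \<le> t + h} = emeasure M (T x -` {t<..t+h} \<inter> space M)"
        by (auto intro!: arg_cong[where f="emeasure M"])
      also have "\<dots> = (\<integral>\<^sup>+s. ennreal (g x s) * indicator {t<..t+h} s \<partial>lborel)"
        by (rule distributed_emeasure[OF dx]) simp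
      also have "\<dots> \<le> (\<integral>\<^sup>+s. ennreal (max 0 (g x t + \<epsilon>)) * indicator {t<..t+h} s \<partial>lborel)"
      proof (rule nn_integral_mono)
        fix s show "ennreal (g x s) * indicator {t<..t+h} s \<le> ennreal (max 0 (g x t + \<epsilon>)) * indicator {t<..t+h} s"
        proof (cases "s \<in> {t<..t+h}")
          case True
          then have "dist s t < d" using h d by (auto simp: dist_real_def)
          moreover have "s \<in> {0..}" using True t by auto
          ultimately have "dist (g x s) (g x t) < \<epsilon>" using d by auto
          then have "g x s \<le> max 0 (g x t + \<epsilon>)" by (auto simp: dist_real_def)
          then have "ennreal (g x s) \<le> ennreal (max 0 (g x t + \<epsilon>))" by (rule ennreal_leI)
          then show ?thesis using True by (simp del: ennreal_max_0)
        qed simp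
      qed
      also have "\<dots> = ennreal (max 0 (g x t + \<epsilon>)) * emeasure lborel {t<..t+h}"
        by (rule nn_integral_cmult_indicator) simp
      also have "\<dots> = ennreal (max 0 (g x t + \<epsilon>) * h)" using h by (simp add: ennreal_mult)
      finally show ?thesis unfolding D_def using h by (simp add: emeasure_eq_measure ennreal_le_iff)
    qed
    then show ?thesis using d by (intro exI[of _ "d/2"]) auto
  qed

  have posT: "\<forall>s>0. 0 < measure M {\<omega>\<in>space M. 0 < T (n0 + d) \<omega> \<and> T (n0 + d) \<omega> \<le> s}" for d
  proof (induction d)
    case 0
    show ?case
    proof safe
      fix s :: real assume s: "0 < s"
      have "measure M {\<omega>\<in>space M. 0 < T (n0 + 0) \<omega> \<and> T (n0 + 0) \<omega> \<le> s} = measure M {\<omega>\<in>space M. 0 < \<tau> n0 \<omega> \<and> \<tau> n0 \<omega> \<le> 0 + s}"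
        by (simp add: T_def)
      also have "\<dots> = exp (- F n0 * max 0 0) - exp (- F n0 * max (0 + s) 0)"
        by (rule expo_interval[OF ex[of n0] Fp[of n0]]) (use s in auto)
      also have "\<dots> > 0" using Fp[of n0] s by simp
      finally show "0 < measure M {\<omega>\<in>space M. 0 < T (n0 + 0) \<omega> \<and> T (n0 + 0) \<omega> \<le> s}" .
    qed
  next
    case (Suc d)
    show ?case
    proof safe
      fix s :: real assume s: "0 < s"
      have a: "0 < measure M {\<omega>\<in>space M. 0 < T (n0 + d) \<omega> \<and> T (n0 + d) \<omega> \<le> s/2}" using Suc.IH[rule_format, of "s/2"] s by linarith
      have "measure M {\<omega>\<in>space M. 0 < \<tau> (Suc (n0 + d)) \<omega> \<and> \<tau> (Suc (n0 + d)) \<omega> \<le> 0 + s/2}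
          = exp (- F (Suc (n0 + d)) * max 0 0) - exp (- F (Suc (n0 + d)) * max (0 + s/2) 0)"
        by (rule expo_interval[OF ex Fp]) (use s in auto)
      also have "\<dots> > 0" using Fp[of "Suc (n0 + d)"] s by simp
      finally have b: "0 < measure M {\<omega>\<in>space M. 0 < \<tau> (Suc (n0 + d)) \<omega> \<and> \<tau> (Suc (n0 + d)) \<omega> \<le> 0 + s/2}" .
      have "measure M {\<omega>\<in>space M. 0 < T (n0 + d) \<omega> \<and> T (n0 + d) \<omega> \<le> s/2} *
          measure M {\<omega>\<in>space M. 0 < \<tau> (Suc (n0 + d)) \<omega> \<and> \<tau> (Suc (n0 + d)) \<omega> \<le> 0 + s/2}
        \<le> measure M {\<omega>\<in>space M. 0 < T (n0 + d) \<omega> + \<tau> (Suc (n0 + d)) \<omega> \<and> T (n0 + d) \<omega> + \<tau> (Suc (n0 + d)) \<omega> \<le> 0 + s/2 + s/2}"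
        by (rule pos_step[OF ind_T_tau]) simp
      moreover have "T (n0 + Suc d) \<omega> = T (n0 + d) \<omega> + \<tau> (Suc (n0 + d)) \<omega>" for \<omega>
        using Tsuc[of "n0 + d" \<omega>] by simp
      ultimately show "0 < measure M {\<omega>\<in>space M. 0 < T (n0 + Suc d) \<omega> \<and> T (n0 + Suc d) \<omega> \<le> s}"
        using mult_pos_pos[OF a b] by simp
    qed
  qed
  have posD: "0 < D x t h" if x: "n0 < x" and t: "0 \<le> t" and h: "0 < h" for x t h
  proof -
    obtain d where d: "x = Suc (n0 + d)" using x by (metis less_iff_Suc_add)
    have a: "0 < measure M {\<omega>\<in>space M. 0 < T (n0 + d) \<omega> \<and> T (n0 + d) \<omega> \<le> h/2}" using posT[of d, rule_format, of "h/2"] h by linarith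
    have "measure M {\<omega>\<in>space M. t < \<tau> x \<omega> \<and> \<tau> x \<omega> \<le> t + h/2}
        = exp (- F x * max t 0) - exp (- F x * max (t + h/2) 0)"
      by (rule expo_interval[OF ex Fp]) (use x h in auto)
    also have "\<dots> > 0" using Fp[of x] x t h by simp
    finally have b: "0 < measure M {\<omega>\<in>space M. t < \<tau> x \<omega> \<and> \<tau> x \<omega> \<le> t + h/2}" .
    have "measure M {\<omega>\<in>space M. 0 < T (n0 + d) \<omega> \<and> T (n0 + d) \<omega> \<le> h/2} *
          measure M {\<omega>\<in>space M. t < \<tau> x \<omega> \<and> \<tau> x \<omega> \<le> t + h/2}
        \<le> measure M {\<omega>\<in>space M. t < T (n0 + d) \<omega> + \<tau> x \<omega> \<and> T (n0 + d) \<omega> + \<tau> x \<omega> \<le> t + h/2 + h/2}"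
      unfolding d by (rule pos_step[OF ind_T_tau]) simp
    then have pp: "0 < measure M {\<omega>\<in>space M. t < T (n0 + d) \<omega> + \<tau> x \<omega> \<and> T (n0 + d) \<omega> + \<tau> x \<omega> \<le> t + h/2 + h/2}"
      using mult_pos_pos[OF a b] by linarith
    have eq: "T x \<omega> = T (n0 + d) \<omega> + \<tau> x \<omega>" for \<omega>
      using Tsuc[of "n0 + d" \<omega>] d by simp
    have "{\<omega>\<in>space M. t < T (n0 + d) \<omega> + \<tau> x \<omega> \<and> T (n0 + d) \<omega> + \<tau> x \<omega> \<le> t + h/2 + h/2}
       = {\<omega>\<in>space M. t < T x \<omega> \<and> T x \<omega> \<le> t + h}" using eq by auto
    then show ?thesis unfolding D_def using pp by simp
  qed
  have x0n: "n0 < x0" "m < x0" by (auto simp: x0_def)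
  have main: "measure M {\<omega>\<in>space M. birth_state n0 \<tau> t \<omega> = enat k} * F k \<le> K * g x t \<and> 0 \<le> g x t"
    if x: "x0 \<le> x" "x \<le> k" and t: "0 \<le> t" for x k t
  proof -
    define p where "p = measure M {\<omega>\<in>space M. birth_state n0 \<tau> t \<omega> = enat k}"
    have p0: "0 \<le> p" by (simp add: p_def)
    have xn: "n0 < x" "n0 \<le> x" "n0 < k" using x x0n by auto
    have l: "0 < F k" using Fp xn by simp
    have gt: "0 \<le> g x t"
    proof (rule ccontr)
      assume ng: "\<not> 0 \<le> g x t"
      obtain \<delta> where \<delta>: "\<delta> > 0" "\<And>h. 0 < h \<Longrightarrow> h \<le> \<delta> \<Longrightarrow> D x t h \<le> max 0 (g x t + (- g x t / 2)) * h"
        using dbound[OF xn(2) t, of "- g x t / 2"] ng by auto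
      have "D x t \<delta> \<le> 0" using \<delta>(2)[of \<delta>] \<delta>(1) ng by simp
      then show False using posD[OF xn(1) t \<delta>(1)] by simp
    qed
    have eps: "p * F k \<le> K * (g x t + \<epsilon>)" if e: "0 < \<epsilon>" for \<epsilon>
    proof -
      obtain \<delta> where \<delta>: "\<delta> > 0" "\<And>h. 0 < h \<Longrightarrow> h \<le> \<delta> \<Longrightarrow> D x t h \<le> max 0 (g x t + \<epsilon>) * h"
        using dbound[OF xn(2) t e] by auto
      define G where "G = g x t + \<epsilon>"
      have G: "0 < G" using gt e by (simp add: G_def)
      show ?thesis
      proof (rule le_of_small[OF \<delta>(1)])
        show "0 \<le> K * G * F k" using K1 G l by simp
        fix h assume h: "0 < h" "h \<le> \<delta>"
        have "p * (F k * h / (1 + F k * h)) \<le> p * (1 - exp (- (F k * h)))"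
          using one_minus_exp_ge[of "F k * h"] l h p0 by (intro mult_left_mono) auto
        also have "\<dots> \<le> D k t h" using xi[OF xn(3), of h t] h unfolding p_def by simp
        also have "\<dots> \<le> K * D x t h" using chainK[OF x] h by simp
        also have "\<dots> \<le> K * (G * h)" using \<delta>(2)[OF h] G K1 by (simp add: G_def)
        finally have "p * (F k * h / (1 + F k * h)) \<le> K * (G * h)" .
        then have "p * (F k * h) / (1 + F k * h) \<le> K * (G * h)" by simp
        moreover have q: "0 < 1 + F k * h" using l h by (simp add: add_pos_pos)
        ultimately have "p * (F k * h) \<le> K * (G * h) * (1 + F k * h)"
          by (simp only: pos_divide_le_eq[OF q])
        then have "(p * F k) * h \<le> (K * G + K * G * F k * h) * h"
          by (simp add: algebra_simps)
        then have "p * F k \<le> K * G + K * G * F k * h" using h by simp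
        then show "p * F k \<le> K * (g x t + \<epsilon>) + K * G * F k * h" by (simp add: G_def)
      qed
    qed
    have "p * F k \<le> K * g x t"
    proof (rule field_le_epsilon)
      fix e :: real assume e: "0 < e"
      have "p * F k \<le> K * (g x t + e / K)" using eps[of "e / K"] e K1 by simp
      also have "\<dots> = K * g x t + e" using K1 by (simp add: field_simps)
      finally show "p * F k \<le> K * g x t + e" .
    qed
    then show ?thesis using gt unfolding p_def by simp
  qed

  have final: "measure M {\<omega> \<in> space M. birth_state n0 \<tau> t \<omega> = enat x} \<le> K * g x t / F x
         \<and> measure M {\<omega> \<in> space M. birth_state n0 \<tau> t \<omega> > enat x \<and> explosion_time n0 \<tau> \<omega> > t}
             / measure M {\<omega> \<in> space M. explosion_time n0 \<tau> \<omega> > t}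
           \<le> K * g x t / measure M {\<omega> \<in> space M. explosion_time n0 \<tau> \<omega> > t}
               * (\<Sum>k. 1 / F (x + 1 + k))"
    if x: "x0 \<le> x" and t: "0 \<le> t" for x t
  proof
    have Fx: "0 < F x" using Fp x x0n by simp
    show "measure M {\<omega> \<in> space M. birth_state n0 \<tau> t \<omega> = enat x} \<le> K * g x t / F x"
      using main[OF x order.refl t] Fx by (simp add: pos_le_divide_eq)
    have g0: "0 \<le> g x t" using main[OF x order.refl t] by simp
    define A where "A i = {\<omega> \<in> space M. birth_state n0 \<tau> t \<omega> = enat (x + 1 + i)} \<union> {\<omega>\<in>space M. \<tau> (n0 + i) \<omega> < 0}" for i
    have tmi[measurable]: "\<tau> (n0 + i) \<in> borel_measurable M" for i using tm by simp
    have Am: "A i \<in> sets M" for i unfolding A_def using Xim by measurable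
    have neg0: "measure M {\<omega>\<in>space M. \<tau> (n0 + i) \<omega> < 0} = 0" for i
    proof -
      have "measure M {\<omega>\<in>space M. \<tau> (n0 + i) \<omega> < 0} \<le> measure M {\<omega>\<in>space M. \<tau> (n0 + i) \<omega> \<le> 0}"
        by (intro finite_measure_mono) auto
      also have "\<dots> = 0" using expo_cdf[OF ex Fp, of "n0 + i" 0] by simp
      finally show ?thesis by (simp add: measure_nonneg antisym)
    qed
    have Ab: "measure M (A i) \<le> K * g x t * (1 / F (x + 1 + i))" for i
    proof -
      have "measure M (A i) \<le> measure M {\<omega> \<in> space M. birth_state n0 \<tau> t \<omega> = enat (x + 1 + i)} + measure M {\<omega>\<in>space M. \<tau> (n0 + i) \<omega> < 0}"
        unfolding A_def using Xim by (intro measure_subadditive) (auto simp: emeasure_eq_measure)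
      also have "\<dots> \<le> K * g x t * (1 / F (x + 1 + i))"
        using main[OF x _ t, of "x + 1 + i"] Fp[of "x + 1 + i"] x x0n neg0[of i]
        by (simp add: pos_le_divide_eq)
      finally show ?thesis .
    qed
    have sF: "summable (\<lambda>i. 1 / F (x + 1 + i))"
    proof -
      have "summable (\<lambda>i. 1 / F (Suc (i + x)))" using summable_ignore_initial_segment[OF Fsum, of x] by simp
      moreover have "(\<lambda>i. 1 / F (Suc (i + x))) = (\<lambda>i. 1 / F (x + 1 + i))" by (simp add: add.commute)
      ultimately show ?thesis by simp
    qed
    have sK: "summable (\<lambda>i. K * g x t * (1 / F (x + 1 + i)))" by (rule summable_mult[OF sF])
    have sA: "summable (\<lambda>i. measure M (A i))"
      by (rule summable_comparison_test[OF _ sK]) (use Ab in auto)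
    have sub: "{\<omega> \<in> space M. birth_state n0 \<tau> t \<omega> > enat x \<and> explosion_time n0 \<tau> \<omega> > t} \<subseteq> (\<Union>i. A i)"
    proof safe
      fix \<omega> assume \<omega>: "\<omega> \<in> space M" "enat x < birth_state n0 \<tau> t \<omega>" "t < explosion_time n0 \<tau> \<omega>"
      show "\<omega> \<in> (\<Union>i. A i)"
      proof (cases "birth_state n0 \<tau> t \<omega>")
        case (enat k)
        then have "x < k" using \<omega> by simp
        then have "k = x + 1 + (k - x - 1)" by simp
        then show ?thesis using enat \<omega> unfolding A_def by (intro UN_I[of "k - x - 1"]) auto
      next
        case infinity
        show ?thesis
        proof (cases "\<exists>i. \<tau> (n0 + i) \<omega> < 0")
          case True
          then obtain i where "\<tau> (n0 + i) \<omega> < 0" by blast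
          then show ?thesis using \<omega> unfolding A_def by auto
        next
          case False
          then have nn: "\<And>i. 0 \<le> \<tau> (n0 + i) \<omega>" by (simp add: not_less)
          have all: "\<And>k. n0 \<le> k \<Longrightarrow> (\<Sum>l=n0..k. \<tau> l \<omega>) \<le> t"
            using infinity unfolding birth_state_def by (auto split: if_splits simp: not_less)
          have ps: "(\<Sum>i\<le>n. \<tau> (n0 + i) \<omega>) \<le> t" for n
            using all[of "n0 + n"] partial_shift[where f="\<lambda>l. \<tau> l \<omega>" and n=n and n0=n0] by simp
          have sm: "summable (\<lambda>i. \<tau> (n0 + i) \<omega>)"
            by (rule bounded_imp_summable[OF nn ps])
          have "(\<Sum>i. \<tau> (n0 + i) \<omega>) \<le> t"
          proof (rule suminf_le_const[OF sm])
            fix n show "(\<Sum>i<n. \<tau> (n0 + i) \<omega>) \<le> t"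
            proof (cases n)
              case 0 then show ?thesis using t by simp
            next
              case (Suc n') then show ?thesis using ps[of n'] by (simp add: lessThan_Suc_atMost)
            qed
          qed
          then show ?thesis using \<omega>(3) unfolding explosion_time_def by simp
        qed
      qed
    qed
    have "measure M {\<omega> \<in> space M. birth_state n0 \<tau> t \<omega> > enat x \<and> explosion_time n0 \<tau> \<omega> > t} \<le> measure M (\<Union>i. A i)"
      using sub Am by (intro finite_measure_mono) auto
    also have "\<dots> \<le> (\<Sum>i. measure M (A i))"
      using Am sA by (intro finite_measure_subadditive_countably) auto
    also have "\<dots> \<le> (\<Sum>i. K * g x t * (1 / F (x + 1 + i)))"
      by (rule suminf_le[OF Ab sA sK])
    also have "\<dots> = K * g x t * (\<Sum>i. 1 / F (x + 1 + i))"
      by (rule suminf_mult[OF sF])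
    finally have E: "measure M {\<omega> \<in> space M. birth_state n0 \<tau> t \<omega> > enat x \<and> explosion_time n0 \<tau> \<omega> > t}
       \<le> K * g x t * (\<Sum>i. 1 / F (x + 1 + i))" .
    then show "measure M {\<omega> \<in> space M. birth_state n0 \<tau> t \<omega> > enat x \<and> explosion_time n0 \<tau> \<omega> > t}
             / measure M {\<omega> \<in> space M. explosion_time n0 \<tau> \<omega> > t}
           \<le> K * g x t / measure M {\<omega> \<in> space M. explosion_time n0 \<tau> \<omega> > t}
               * (\<Sum>k. 1 / F (x + 1 + k))"
      by (simp add: divide_right_mono measure_nonneg)
  qed
  show ?thesis
    using final x0n by (intro exI[of _ K] exI[of _ x0]) auto
qed

end
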